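(* Under the setting and assumptions in the context, fix a client $i$ and weights $\boldsymbol\alpha_i=(\alpha_{i1},\dots,\alpha_{im})\in\mathbb R^m$ with $\sum_{j=1}^m\alpha_{ij}=1$. Let $\hat{\mathbf g}_j$ be the empirical classifier of client $j$, $\mathbf g_j:=\mathbb E[\hat{\mathbf g}_j]$, and $\hat{\mathbf g}_i^*:=\sum_{j=1}^m\alpha_{ij}\hat{\mathbf g}_j$. Define the testing loss $R_i(\boldsymbol\alpha_i):=\mathbb E\big[\chi^2_i\big(P^{(i)}_{XY},P_XQ_{Y|X}(\hat{\mathbf g}^*_i)\big)\big]$ and $V_j:=n_j\,\mathbb E\big[\chi^2_i\big(P_XQ_{Y|X}(\hat{\mathbf g}_j),P_XQ_{Y|X}(\mathbf g_j)\big)\big]$. Then $$R_i(\boldsymbol\alpha_i)=\chi^2_i\Big(P_XQ_{Y|X}(\mathbf g_i),\sum_{j=1}^m\alpha_{ij}P_XQ_{Y|X}(\mathbf g_j)\Big)+\sum_{j=1}^m\frac{\alpha_{ij}^2}{n_j}V_j+\chi^2_i\big(P^{(i)}_{XY},P_XQ_{Y|X}(\mathbf g_i)\big),$$ which is a quadratic function of $\boldsymbol\alpha_i$; here $V_j$ does not depend on $\boldsymbol\alpha_i$.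
   Context: Let $\mathcal X$ be a finite input space and $\mathcal Y$ a finite label set with $|\mathcal Y|=K$. Let $\mathbf f:\mathcal X\to\mathbb R^d$ be a fixed feature map. For a function $\mathbf g:\mathcal Y\to\mathbb R^d$ define the model $Q_{Y|X}(y|x;\mathbf g)=\frac1K\big(1+\mathbf f(x)^\top\mathbf g(y)\big)$. There are $m$ clients; client $j$ has a true joint distribution $P^{(j)}_{XY}$ on $\mathcal X\times\mathcal Y$. Standing assumptions: (A1) $P^{(j)}_X=P_X$ for all $j$, with $P_X(x)>0$ for all $x$; (A2) $\mathbb E_{P_X}[\mathbf f(X)]=\mathbf 0$; (A3) $\Lambda:=\mathbb E_{P_X}[\mathbf f(X)\mathbf f(X)^\top]$ is invertible. Client $j$ holds $n_j$ i.i.d. samples from $P^{(j)}_{XY}$, samples of different clients being independent; $\hat P^{(j)}_{XY}$ is the resulting empirical distribution and $\mathbb E$ denotes expectation over sampling. The $\chi^2_i$-distance is $\chi^2_i(P,Q)=\sum_{x,y}\frac{(P(x,y)-Q(x,y))^2}{P^{(i)}_X(x)}$ (applied to arbitrary real functions on $\mathcal X\times\mathcal Y$), and $P_XQ_{Y|X}(\mathbf g)$ denotes $(x,y)\mapsto P_X(x)Q_{Y|X}(y|x;\mathbf g)$. The empirical classifier of client $j$ is $\hat{\mathbf g}_j:=\arg\min_{\mathbf g:\mathcal Y\to\mathbb R^d}\chi^2_j\big(\hat P^{(j)}_{XY},P_XQ_{Y|X}(\mathbf g)\big)$ (which exists and is unique under (A1)-(A3)). *)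

theory Defs
  imports "HOL-Analysis.Analysis" "HOL-Probability.Probability"
begin

definition chi2 :: "('x::finite \<Rightarrow> real) \<Rightarrow> ('x \<times> 'y::finite \<Rightarrow> real) \<Rightarrow> ('x \<times> 'y \<Rightarrow> real) \<Rightarrow> real" where
  "chi2 PX P Q = (\<Sum>x\<in>UNIV. \<Sum>y\<in>UNIV. (P (x, y) - Q (x, y))^2 / PX x)"

definition QPX :: "('x::finite \<Rightarrow> real) \<Rightarrow> ('x \<Rightarrow> real^'d::finite) \<Rightarrow> ('y::finite \<Rightarrow> real^'d) \<Rightarrow> ('x \<times> 'y \<Rightarrow> real)" where
  "QPX PX f g = (\<lambda>(x, y). PX x * (1 + f x \<bullet> g y) / real CARD('y))"

definition emp_dist :: "nat \<Rightarrow> (nat \<Rightarrow> 'a) \<Rightarrow> ('a \<Rightarrow> real)" where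
  "emp_dist n s = (\<lambda>a. real (card {k\<in>{..<n}. s k = a}) / real n)"

definition emp_classifier :: "('x::finite \<Rightarrow> real) \<Rightarrow> ('x \<Rightarrow> real^'d::finite) \<Rightarrow> ('x \<times> 'y::finite \<Rightarrow> real) \<Rightarrow> ('y \<Rightarrow> real^'d)" where
  "emp_classifier PX f Phat = (THE g. \<forall>g'. chi2 PX Phat (QPX PX f g) \<le> chi2 PX Phat (QPX PX f g'))"

text \<open>Joint sampling distribution: omega j k is the k-th sample of client j,
  all samples independent, client j's samples i.i.d. from P j.\<close>
definition sample_pmf :: "nat \<Rightarrow> (nat \<Rightarrow> nat) \<Rightarrow> (nat \<Rightarrow> ('x \<times> 'y) pmf) \<Rightarrow> (nat \<Rightarrow> nat \<Rightarrow> 'x \<times> 'y) pmf" where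
  "sample_pmf m n P = Pi_pmf {..<m} (\<lambda>_. undefined) (\<lambda>j. Pi_pmf {..<n j} undefined (\<lambda>_. P j))"

end

theory Submission
  imports Defs
begin

definition Lam :: "('x::finite \<Rightarrow> real) \<Rightarrow> ('x \<Rightarrow> real^'d::finite) \<Rightarrow> real^'d^'d" where
  "Lam PX f = (\<chi> k l. \<Sum>x\<in>UNIV. PX x * (f x $ k) * (f x $ l))"

definition Linv :: "('x::finite \<Rightarrow> real) \<Rightarrow> ('x \<Rightarrow> real^'d::finite) \<Rightarrow> real^'d^'d" where
  "Linv PX f = matrix_inv (Lam PX f)"

definition ip :: "('x::finite \<Rightarrow> real) \<Rightarrow> ('x \<times> 'y::finite \<Rightarrow> real) \<Rightarrow> ('x \<times> 'y \<Rightarrow> real) \<Rightarrow> real" where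
  "ip PX a b = (\<Sum>z\<in>UNIV. a z * b z / PX (fst z))"

definition W :: "('x::finite \<Rightarrow> real) \<Rightarrow> ('x \<Rightarrow> real^'d::finite) \<Rightarrow> ('y::finite \<Rightarrow> real^'d) \<Rightarrow> ('x \<times> 'y \<Rightarrow> real)" where
  "W PX f v = (\<lambda>z. PX (fst z) * (f (fst z) \<bullet> v (snd z)))"

definition sv :: "('x::finite \<Rightarrow> real^'d::finite) \<Rightarrow> ('x \<times> 'y::finite \<Rightarrow> real) \<Rightarrow> 'y \<Rightarrow> real^'d" where
  "sv f h y = (\<Sum>x\<in>UNIV. h (x, y) *\<^sub>R f x)"

definition proj :: "('x::finite \<Rightarrow> real) \<Rightarrow> ('x \<Rightarrow> real^'d::finite) \<Rightarrow> ('x \<times> 'y::finite \<Rightarrow> real) \<Rightarrow> ('x \<times> 'y \<Rightarrow> real)" where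
  "proj PX f h = W PX f (\<lambda>y. Linv PX f *v sv f h y)"

definition c0 :: "('x::finite \<Rightarrow> real) \<Rightarrow> ('x \<times> 'y::finite \<Rightarrow> real)" where
  "c0 PX = (\<lambda>z. PX (fst z) / real CARD('y))"

definition Gc :: "('x::finite \<Rightarrow> real) \<Rightarrow> ('x \<Rightarrow> real^'d::finite) \<Rightarrow> ('x \<times> 'y::finite \<Rightarrow> real) \<Rightarrow> ('y \<Rightarrow> real^'d)" where
  "Gc PX f h = (\<lambda>y. real CARD('y) *\<^sub>R (Linv PX f *v sv f h y))"

lemma sum_UNIV_pair: "(\<Sum>z\<in>UNIV. g z) = (\<Sum>x\<in>UNIV. \<Sum>y\<in>UNIV. g (x, y))"
  by (simp add: sum.cartesian_product UNIV_Times_UNIV[symmetric] del: UNIV_Times_UNIV)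

lemma chi2_ip: "chi2 PX a b = ip PX (\<lambda>z. a z - b z) (\<lambda>z. a z - b z)"
  unfolding chi2_def ip_def sum_UNIV_pair by (simp add: power2_eq_square)

lemma Lam_mult: "Lam PX f *v v = (\<Sum>x\<in>UNIV. (PX x * (f x \<bullet> v)) *\<^sub>R f x)"
proof (subst vec_eq_iff, intro allI)
  fix k
  have "(Lam PX f *v v) $ k = (\<Sum>l\<in>UNIV. \<Sum>x\<in>UNIV. PX x * f x $ k * f x $ l * v $ l)"
    unfolding Lam_def matrix_vector_mult_def by (simp add: sum_distrib_right)
  also have "\<dots> = (\<Sum>x\<in>UNIV. \<Sum>l\<in>UNIV. PX x * f x $ k * f x $ l * v $ l)"
    by (rule sum.swap)
  also have "\<dots> = (\<Sum>x\<in>UNIV. (PX x * (f x \<bullet> v)) *\<^sub>R f x) $ k"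
    unfolding sum_component inner_vec_def
    by (intro sum.cong refl) (simp add: sum_distrib_left sum_distrib_right mult_ac)
  finally show "(Lam PX f *v v) $ k = (\<Sum>x\<in>UNIV. (PX x * (f x \<bullet> v)) *\<^sub>R f x) $ k" .
qed

lemma inner_Lam: "u \<bullet> (Lam PX f *v v) = (\<Sum>x\<in>UNIV. PX x * (f x \<bullet> u) * (f x \<bullet> v))"
  unfolding Lam_mult by (simp add: inner_sum_right mult_ac inner_commute)

lemma inner_Lam_sym: "u \<bullet> (Lam PX f *v v) = (Lam PX f *v u) \<bullet> v"
proof -
  have "(Lam PX f *v u) \<bullet> v = v \<bullet> (Lam PX f *v u)" by (rule inner_commute)
  then show ?thesis by (simp add: inner_Lam mult_ac)
qed

context
  fixes PX :: "'x::finite \<Rightarrow> real" and f :: "'x \<Rightarrow> real^'d::finite"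
  assumes PX_pos: "\<And>x. PX x > 0"
    and A2: "(\<Sum>x\<in>UNIV. PX x *\<^sub>R f x) = 0"
    and A3: "invertible (\<chi> k l. \<Sum>x\<in>UNIV. PX x * (f x $ k) * (f x $ l))"
begin

lemma Linv_props: "Lam PX f ** Linv PX f = mat 1" "Linv PX f ** Lam PX f = mat 1"
proof -
  have "\<exists>A'. Lam PX f ** A' = mat 1 \<and> A' ** Lam PX f = mat 1"
    using A3 unfolding invertible_def Lam_def by auto
  from someI_ex[OF this] show "Lam PX f ** Linv PX f = mat 1" "Linv PX f ** Lam PX f = mat 1"
    unfolding Linv_def matrix_inv_def by auto
qed

lemma Lam_Linv: "Lam PX f *v (Linv PX f *v s) = s"
  by (simp add: matrix_vector_mul_assoc Linv_props)

lemma Linv_Lam: "Linv PX f *v (Lam PX f *v s) = s"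
  by (simp add: matrix_vector_mul_assoc Linv_props)

lemma ipW: "ip PX h (W PX f v) = (\<Sum>y\<in>UNIV. sv f h y \<bullet> v y)"
proof -
  have "ip PX h (W PX f v) = (\<Sum>x\<in>UNIV. \<Sum>y\<in>UNIV. h (x, y) * (f x \<bullet> v y))"
    unfolding ip_def W_def sum_UNIV_pair using PX_pos by (simp add: less_imp_neq[symmetric])
  also have "\<dots> = (\<Sum>y\<in>UNIV. sv f h y \<bullet> v y)"
    unfolding sv_def inner_sum_left by (simp add: sum.swap[of "\<lambda>x y. h (x, y) * (f x \<bullet> v y)"])
  finally show ?thesis .
qed

lemma ipWW: "ip PX (W PX f u) (W PX f v) = (\<Sum>y\<in>UNIV. \<Sum>x\<in>UNIV. PX x * (f x \<bullet> u y) * (f x \<bullet> v y))"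
proof -
  have "ip PX (W PX f u) (W PX f v) = (\<Sum>x\<in>UNIV. \<Sum>y\<in>UNIV. PX x * (f x \<bullet> u y) * (f x \<bullet> v y))"
    unfolding ip_def W_def sum_UNIV_pair using PX_pos by (simp add: less_imp_neq[symmetric] mult_ac)
  then show ?thesis by (simp add: sum.swap[of "\<lambda>x y. PX x * (f x \<bullet> u y) * (f x \<bullet> v y)"])
qed

lemma ip_c0_W: fixes v :: "'y::finite \<Rightarrow> real^'d" shows "ip PX (c0 PX) (W PX f v) = 0"
proof -
  have "sv f (c0 PX :: 'x \<times> 'y \<Rightarrow> real) y = 0" for y :: 'y
  proof -
    have "sv f (c0 PX :: 'x \<times> 'y \<Rightarrow> real) y = (1 / real CARD('y)) *\<^sub>R (\<Sum>x\<in>UNIV. PX x *\<^sub>R f x)"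
      unfolding sv_def c0_def by (simp add: scaleR_sum_right)
    then show ?thesis using A2 by simp
  qed
  then show ?thesis unfolding ipW by simp
qed

lemma ip_proj_W: "ip PX (proj PX f h) (W PX f v) = ip PX h (W PX f v)"
proof -
  have "ip PX (proj PX f h) (W PX f v) = (\<Sum>y\<in>UNIV. (Linv PX f *v sv f h y) \<bullet> (Lam PX f *v v y))"
    unfolding proj_def ipWW inner_Lam by simp
  also have "\<dots> = (\<Sum>y\<in>UNIV. sv f h y \<bullet> v y)"
    by (intro sum.cong refl) (simp add: inner_Lam_sym Lam_Linv)
  finally show ?thesis unfolding ipW .
qed

lemma ip_sym: "ip PX a b = ip PX b a"
  unfolding ip_def by (simp add: mult.commute)

lemma ip_diff_left: "ip PX (\<lambda>z. a z - b z) c = ip PX a c - ip PX b c"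
  unfolding ip_def by (simp add: sum_subtractf[symmetric] left_diff_distrib diff_divide_distrib)

lemma ip_add_left: "ip PX (\<lambda>z. a z + b z) c = ip PX a c + ip PX b c"
  unfolding ip_def by (simp add: sum.distrib[symmetric] distrib_right add_divide_distrib)

lemma ip_add_right: "ip PX c (\<lambda>z. a z + b z) = ip PX c a + ip PX c b"
  unfolding ip_def by (simp add: sum.distrib[symmetric] distrib_left add_divide_distrib)

lemma ip_nonneg: "ip PX a a \<ge> 0"
  unfolding ip_def using PX_pos by (intro sum_nonneg) (simp add: less_imp_le)

lemma W_diff: "(\<lambda>z. W PX f u z - W PX f v z) = W PX f (\<lambda>y. u y - v y)"
  unfolding W_def by (simp add: inner_diff_right right_diff_distrib)

lemma W_zero: 
  assumes "ip PX (W PX f u) (W PX f u) = 0" shows "u = (\<lambda>y. 0)"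
proof
  fix y
  have nn: "\<And>y x. 0 \<le> PX x * (f x \<bullet> u y) * (f x \<bullet> u y)" using PX_pos
    by (simp add: less_imp_le mult.assoc)
  have "(\<Sum>x\<in>UNIV. PX x * (f x \<bullet> u y) * (f x \<bullet> u y)) = 0"
    using assms unfolding ipWW
    by (subst (asm) sum_nonneg_eq_0_iff) (auto intro!: sum_nonneg nn)
  then have "\<forall>x. PX x * (f x \<bullet> u y) * (f x \<bullet> u y) = 0"
    by (subst (asm) sum_nonneg_eq_0_iff) (auto intro!: nn)
  then have "\<forall>x. f x \<bullet> u y = 0" using PX_pos by (metis mult_eq_0_iff less_irrefl)
  then have "Lam PX f *v u y = 0" unfolding Lam_mult by simp
  then have "Linv PX f *v (Lam PX f *v u y) = 0" by simp
  then show "u y = 0" by (simp add: Linv_Lam)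
qed

lemma QPX_eq: fixes g :: "'y::finite \<Rightarrow> real^'d" shows "QPX PX f g = (\<lambda>z. c0 PX z + W PX f (\<lambda>y. (1 / real CARD('y)) *\<^sub>R g y) z)"
  unfolding QPX_def c0_def W_def by (auto simp: fun_eq_iff field_simps)

lemma QPX_Gc: "QPX PX f (Gc PX f h) = (\<lambda>z. c0 PX z + proj PX f h z)"
  unfolding QPX_eq Gc_def proj_def by simp

lemma ip_perp: "ip PX (\<lambda>z. h z - c0 PX z - proj PX f h z) (W PX f v) = 0"
  by (simp add: ip_diff_left ip_c0_W ip_proj_W)

lemma emp_classifier_eq: fixes h :: "'x \<times> 'y::finite \<Rightarrow> real" shows "emp_classifier PX f h = Gc PX f h"
proof -
  let ?a = "\<lambda>z. h z - c0 PX z - proj PX f h z"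
  have key: "chi2 PX h (QPX PX f g) = ip PX ?a ?a + ip PX (W PX f (\<lambda>y. Linv PX f *v sv f h y - (1 / real CARD('y)) *\<^sub>R g y)) (W PX f (\<lambda>y. Linv PX f *v sv f h y - (1 / real CARD('y)) *\<^sub>R g y))"
    (is "_ = _ + ip PX ?w ?w") for g
  proof -
    have e: "(\<lambda>z. h z - QPX PX f g z) = (\<lambda>z. ?a z + ?w z)"
      unfolding QPX_eq W_diff[symmetric] proj_def by (auto simp: fun_eq_iff)
    have p: "ip PX ?a ?w = 0" by (rule ip_perp)
    have p2: "ip PX ?w ?a = 0" using p by (subst ip_sym)
    show ?thesis unfolding chi2_ip e ip_add_left ip_add_right p p2 by simp
  qed
  have kG: "chi2 PX h (QPX PX f (Gc PX f h)) = ip PX ?a ?a"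
    unfolding key Gc_def by (simp add: W_def ip_def)
  show ?thesis unfolding emp_classifier_def
  proof (rule the_equality)
    show "\<forall>g'. chi2 PX h (QPX PX f (Gc PX f h)) \<le> chi2 PX h (QPX PX f g')"
    proof
      fix g'
      show "chi2 PX h (QPX PX f (Gc PX f h)) \<le> chi2 PX h (QPX PX f g')"
        unfolding kG key[of g'] using ip_nonneg by simp
    qed
  next
    fix g assume "\<forall>g'. chi2 PX h (QPX PX f g) \<le> chi2 PX h (QPX PX f g')"
    then have "chi2 PX h (QPX PX f g) \<le> ip PX ?a ?a" using kG by metis
    then have "ip PX (W PX f (\<lambda>y. Linv PX f *v sv f h y - (1 / real CARD('y)) *\<^sub>R g y)) (W PX f (\<lambda>y. Linv PX f *v sv f h y - (1 / real CARD('y)) *\<^sub>R g y)) = 0"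
      unfolding key using ip_nonneg by (meson add_le_same_cancel1 order_antisym)
    from W_zero[OF this] have "\<And>y. Linv PX f *v sv f h y = (1 / real CARD('y)) *\<^sub>R g y"
      by (metis eq_iff_diff_eq_0)
    then show "g = Gc PX f h" unfolding Gc_def by (auto simp: fun_eq_iff)
  qed
qed

end

lemma Linv_sum: "Linv PX f *v (\<Sum>x\<in>A. a x *\<^sub>R v x) = (\<Sum>x\<in>A. a x *\<^sub>R (Linv PX f *v v x))"
  by (simp add: linear_sum[OF matrix_vector_mul_linear] matrix_vector_mult_scaleR)

lemma proj_expand: "proj PX f h (x, y) = (\<Sum>x'\<in>UNIV. h (x', y) * (PX x * (f x \<bullet> (Linv PX f *v f x'))))"
  unfolding proj_def W_def sv_def Linv_sum
  by (simp add: inner_sum_right sum_distrib_left mult_ac)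

lemma Gc_expand: fixes h :: "'x::finite \<times> 'y::finite \<Rightarrow> real" shows "Gc PX f h y = (\<Sum>x'\<in>UNIV. h (x', y) *\<^sub>R (real CARD('y) *\<^sub>R (Linv PX f *v f x')))"
  unfolding Gc_def sv_def Linv_sum by (simp add: scaleR_sum_right mult.commute)

lemma fin_Omega: "finite (set_pmf (sample_pmf m n (P :: nat \<Rightarrow> ('a::finite \<times> 'b::finite) pmf)))"
proof -
  have "finite (set_pmf (Pi_pmf {..<n j} undefined (\<lambda>_. P j)))" for j
    by (subst set_Pi_pmf) (auto intro!: finite_PiE_dflt)
  then show ?thesis unfolding sample_pmf_def
    by (subst set_Pi_pmf) (auto intro!: finite_PiE_dflt)
qed

lemma comp_j: "j < m \<Longrightarrow> map_pmf (\<lambda>\<omega>. \<omega> j) (sample_pmf m n P) = Pi_pmf {..<n j} undefined (\<lambda>_. P j)"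
  unfolding sample_pmf_def by (subst Pi_pmf_component) auto

lemma comp_jk: "j < m \<Longrightarrow> k < n j \<Longrightarrow> map_pmf (\<lambda>\<omega>. \<omega> j k) (sample_pmf m n P) = P j"
proof -
  assume a: "j < m" "k < n j"
  have "map_pmf (\<lambda>\<omega>. \<omega> j k) (sample_pmf m n P) = map_pmf (\<lambda>h. h k) (map_pmf (\<lambda>\<omega>. \<omega> j) (sample_pmf m n P))"
    by (simp add: pmf.map_comp o_def)
  also have "\<dots> = P j" using a by (simp add: comp_j Pi_pmf_component)
  finally show ?thesis .
qed

lemma pair_comp:
  assumes "finite A" "j \<in> A" "k \<in> A" "j \<noteq> k"
  shows "map_pmf (\<lambda>\<omega>. (\<omega> j, \<omega> k)) (Pi_pmf A d p) = pair_pmf (p j) (p k)"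
proof -
  define B where "B = A - {j, k}"
  have A: "A = insert j (insert k B)" "finite B" "j \<notin> insert k B" "k \<notin> B"
    using assms by (auto simp: B_def)
  have "map_pmf (\<lambda>\<omega>. (\<omega> j, \<omega> k)) (Pi_pmf A d p) =
     map_pmf (\<lambda>x. (fst x, fst (snd x))) (pair_pmf (p j) (pair_pmf (p k) (Pi_pmf B d p)))"
    unfolding A(1) using A assms(4)
    apply (subst Pi_pmf_insert, simp, simp)
    apply (subst Pi_pmf_insert, simp, simp)
    apply (simp add: pmf.map_comp o_def pair_map_pmf2 case_prod_beta)
    done
  also have "\<dots> = pair_pmf (p j) (p k)"
    using map_pair[of id fst "p j" "pair_pmf (p k) (Pi_pmf B d p)"]
    by (simp add: map_fst_pair_pmf case_prod_beta')
  finally show ?thesis .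
qed

lemma integral_pair_prod:
  fixes F G :: "_ \<Rightarrow> real"
  assumes "finite (set_pmf A)" "finite (set_pmf B)"
  shows "measure_pmf.expectation (pair_pmf A B) (\<lambda>(a, b). F a * G b) =
         measure_pmf.expectation A F * measure_pmf.expectation B G"
proof -
  have "measure_pmf.expectation (pair_pmf A B) (\<lambda>(a, b). F a * G b) =
      (\<Sum>z\<in>set_pmf A \<times> set_pmf B. (case z of (a, b) \<Rightarrow> F a * G b) * pmf (pair_pmf A B) z)"
    using assms by (intro integral_measure_pmf_real) auto
  also have "\<dots> = (\<Sum>a\<in>set_pmf A. \<Sum>b\<in>set_pmf B. (F a * pmf A a) * (G b * pmf B b))"
    by (simp add: sum.cartesian_product, intro sum.cong refl) (auto simp: pmf_pair mult_ac)
  also have "\<dots> = (\<Sum>a\<in>set_pmf A. F a * pmf A a) * (\<Sum>b\<in>set_pmf B. G b * pmf B b)"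
    by (simp add: sum_product)
  also have "\<dots> = measure_pmf.expectation A F * measure_pmf.expectation B G"
    using assms by (simp add: integral_measure_pmf_real)
  finally show ?thesis .
qed

lemma indep_jk:
  fixes F G :: "(nat \<Rightarrow> 'a::finite \<times> 'b::finite) \<Rightarrow> real"
  assumes "j < m" "k < m" "j \<noteq> k"
  shows "measure_pmf.expectation (sample_pmf m n P) (\<lambda>\<omega>. F (\<omega> j) * G (\<omega> k)) =
    measure_pmf.expectation (sample_pmf m n P) (\<lambda>\<omega>. F (\<omega> j)) * measure_pmf.expectation (sample_pmf m n P) (\<lambda>\<omega>. G (\<omega> k))"
proof -
  let ?Q = "\<lambda>j. Pi_pmf {..<n j} undefined (\<lambda>_. P j)"
  have fQ: "finite (set_pmf (?Q j))" for j by (subst set_Pi_pmf) (auto intro!: finite_PiE_dflt)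
  have "measure_pmf.expectation (sample_pmf m n P) (\<lambda>\<omega>. F (\<omega> j) * G (\<omega> k)) =
     measure_pmf.expectation (map_pmf (\<lambda>\<omega>. (\<omega> j, \<omega> k)) (sample_pmf m n P)) (\<lambda>(a, b). F a * G b)"
    by simp
  also have "map_pmf (\<lambda>\<omega>. (\<omega> j, \<omega> k)) (sample_pmf m n P) = pair_pmf (?Q j) (?Q k)"
    unfolding sample_pmf_def using assms by (subst pair_comp) auto
  also have "measure_pmf.expectation (pair_pmf (?Q j) (?Q k)) (\<lambda>(a, b). F a * G b) =
      measure_pmf.expectation (?Q j) F * measure_pmf.expectation (?Q k) G"
    by (rule integral_pair_prod[OF fQ fQ])
  also have "measure_pmf.expectation (?Q j) F = measure_pmf.expectation (sample_pmf m n P) (\<lambda>\<omega>. F (\<omega> j))"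
    using assms by (simp flip: comp_j)
  also have "measure_pmf.expectation (?Q k) G = measure_pmf.expectation (sample_pmf m n P) (\<lambda>\<omega>. G (\<omega> k))"
    using assms by (simp flip: comp_j)
  finally show ?thesis .
qed

lemma E_emp:
  fixes P :: "nat \<Rightarrow> ('a::finite \<times> 'b::finite) pmf"
  assumes "j < m" "n j > 0"
  shows "measure_pmf.expectation (sample_pmf m n P) (\<lambda>\<omega>. emp_dist (n j) (\<omega> j) z) = pmf (P j) z"
proof -
  have c: "real (card {k\<in>{..<N}. s k = z}) = (\<Sum>k<N. if s k = z then 1 else 0)" for N :: nat and s
    using sum.inter_filter[OF finite_lessThan[of N], of "\<lambda>_. 1::real" "\<lambda>k. s k = z"] by simp
  have e1: "measure_pmf.expectation (sample_pmf m n P) (\<lambda>\<omega>. if \<omega> j k = z then 1 else 0) = pmf (P j) z"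
    if k: "k < n j" for k
  proof -
    have "measure_pmf.expectation (sample_pmf m n P) (\<lambda>\<omega>. if \<omega> j k = z then 1 else 0)
        = measure_pmf.expectation (map_pmf (\<lambda>\<omega>. \<omega> j k) (sample_pmf m n P)) (\<lambda>w. if w = z then 1 else (0::real))"
      by simp
    also have "\<dots> = measure_pmf.expectation (P j) (\<lambda>w. if w = z then 1 else (0::real))"
      using assms k by (simp add: comp_jk)
    also have "\<dots> = pmf (P j) z"
      by (subst integral_measure_pmf_real[of "{z}"]) (auto split: if_splits)
    finally show ?thesis .
  qed
  have "measure_pmf.expectation (sample_pmf m n P) (\<lambda>\<omega>. emp_dist (n j) (\<omega> j) z) =
      measure_pmf.expectation (sample_pmf m n P) (\<lambda>\<omega>. (\<Sum>k<n j. if \<omega> j k = z then 1 else 0) / real (n j))"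
    unfolding emp_dist_def c ..
  also have "\<dots> = (\<Sum>k<n j. measure_pmf.expectation (sample_pmf m n P) (\<lambda>\<omega>. if \<omega> j k = z then 1 else 0)) / real (n j)"
    unfolding integral_divide_zero
    by (subst Bochner_Integration.integral_sum) (auto intro: integrable_measure_pmf_finite[OF fin_Omega])
  also have "\<dots> = pmf (P j) z" using assms by (simp add: e1)
  finally show ?thesis .
qed


lemma proj_diff: "proj PX f (\<lambda>z. h1 z - h2 z) z = proj PX f h1 z - proj PX f h2 z"
  by (cases z) (simp add: proj_expand left_diff_distrib sum_subtractf)

lemma proj_lin: "proj PX f (\<lambda>z. \<Sum>j\<in>A. c j * h j z) z = (\<Sum>j\<in>A. c j * proj PX f (h j) z)"
proof (cases z)
  case (Pair x y)
  have "proj PX f (\<lambda>z. \<Sum>j\<in>A. c j * h j z) (x, y) =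
     (\<Sum>x'\<in>UNIV. \<Sum>j\<in>A. c j * (h j (x', y) * (PX x * (f x \<bullet> (Linv PX f *v f x')))))"
    unfolding proj_expand sum_distrib_right by (simp add: mult.assoc)
  also have "\<dots> = (\<Sum>j\<in>A. \<Sum>x'\<in>UNIV. c j * (h j (x', y) * (PX x * (f x \<bullet> (Linv PX f *v f x')))))"
    by (rule sum.swap)
  also have "\<dots> = (\<Sum>j\<in>A. c j * proj PX f (h j) (x, y))"
    unfolding proj_expand sum_distrib_left ..
  finally show ?thesis using Pair by simp
qed

lemma ip_sum_right: "ip PX a (\<lambda>z. \<Sum>j\<in>A. c j * h j z) = (\<Sum>j\<in>A. c j * ip PX a (h j))"
proof -
  have "ip PX a (\<lambda>z. \<Sum>j\<in>A. c j * h j z) = (\<Sum>z\<in>UNIV. \<Sum>j\<in>A. c j * (a z * h j z / PX (fst z)))"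
    unfolding ip_def sum_distrib_left sum_divide_distrib by (simp add: mult_ac)
  also have "\<dots> = (\<Sum>j\<in>A. \<Sum>z\<in>UNIV. c j * (a z * h j z / PX (fst z)))"
    by (rule sum.swap)
  also have "\<dots> = (\<Sum>j\<in>A. c j * ip PX a (h j))"
    unfolding ip_def sum_distrib_left ..
  finally show ?thesis .
qed

lemma ip_expand3: "ip PX (\<lambda>z. a z + b z - s z) (\<lambda>z. a z + b z - s z) =
   ip PX a a + ip PX b b + ip PX s s + 2 * ip PX a b - 2 * ip PX a s - 2 * ip PX b s"
  unfolding ip_def
  by (simp add: sum.distrib[symmetric] sum_subtractf[symmetric] sum_distrib_left add_divide_distrib
        diff_divide_distrib algebra_simps)

lemma ip_sq_sum: "ip PX (\<lambda>z. \<Sum>j\<in>A. c j * h j z) (\<lambda>z. \<Sum>j\<in>A. c j * h j z) =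
   (\<Sum>z\<in>UNIV. \<Sum>j\<in>A. \<Sum>k\<in>A. c j * c k * (h j z * h k z) / PX (fst z))"
  unfolding ip_def
  by (simp add: sum_product sum_divide_distrib mult_ac)

theorem theorem1:
  fixes PX :: "'x::finite \<Rightarrow> real"
    and f :: "'x \<Rightarrow> real^'d::finite"
    and P :: "nat \<Rightarrow> ('x \<times> 'y::finite) pmf"
    and m :: nat and n :: "nat \<Rightarrow> nat" and i :: nat
    and \<alpha> :: "nat \<Rightarrow> real"
  assumes A1: "\<And>j x. j < m \<Longrightarrow> (\<Sum>y\<in>UNIV. pmf (P j) (x, y)) = PX x"
    and PX_pos: "\<And>x. PX x > 0"
    and A2: "(\<Sum>x\<in>UNIV. PX x *\<^sub>R f x) = 0"
    and A3: "invertible (\<chi> k l. \<Sum>x\<in>UNIV. PX x * (f x $ k) * (f x $ l))"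
    and n_pos: "\<And>j. j < m \<Longrightarrow> n j > 0"
    and i_lt: "i < m"
    and \<alpha>_sum: "(\<Sum>j<m. \<alpha> j) = 1"
  shows
    "let \<Omega> = sample_pmf m n P;
         ghat = (\<lambda>j \<omega>. emp_classifier PX f (emp_dist (n j) (\<omega> j)));
         g = (\<lambda>j y. measure_pmf.expectation \<Omega> (\<lambda>\<omega>. ghat j \<omega> y));
         gstar = (\<lambda>\<omega> y. \<Sum>j<m. \<alpha> j *\<^sub>R ghat j \<omega> y);
         R = measure_pmf.expectation \<Omega> (\<lambda>\<omega>. chi2 PX (pmf (P i)) (QPX PX f (gstar \<omega>)));
         V = (\<lambda>j. real (n j) * measure_pmf.expectation \<Omega>
                      (\<lambda>\<omega>. chi2 PX (QPX PX f (ghat j \<omega>)) (QPX PX f (g j))))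
     in R = chi2 PX (QPX PX f (g i)) (\<lambda>xy. \<Sum>j<m. \<alpha> j * QPX PX f (g j) xy)
            + (\<Sum>j<m. (\<alpha> j)^2 / real (n j) * V j)
            + chi2 PX (pmf (P i)) (QPX PX f (g i))"
proof -
  define \<Omega> where "\<Omega> = sample_pmf m n P"
  define p where "p j = pmf (P j)" for j
  define Ph where "Ph j w = emp_dist (n j) w" for j and w :: "nat \<Rightarrow> 'x \<times> 'y"
  define e where "e j w z = proj PX f (Ph j w) z - proj PX f (p j) z" for j w z
  define a where "a z = p i z - c0 PX z - proj PX f (p i) z" for z
  define b where "b z = proj PX f (p i) z - (\<Sum>j<m. \<alpha> j * proj PX f (p j) z)" for z
  define s where "s \<omega> z = (\<Sum>j<m. \<alpha> j * e j (\<omega> j) z)" for \<omega> z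
  note intg = integrable_measure_pmf_finite[OF fin_Omega, of m n P, folded \<Omega>_def]
  note ec = emp_classifier_eq[OF PX_pos A2 A3]
  note qg = QPX_Gc[OF PX_pos A2 A3]
  have EPh: "measure_pmf.expectation \<Omega> (\<lambda>\<omega>. Ph j (\<omega> j) z) = p j z" if "j < m" for j z
    unfolding \<Omega>_def Ph_def p_def using E_emp[of j m n P z] that n_pos by simp
  have G: "(\<lambda>y. measure_pmf.expectation \<Omega> (\<lambda>\<omega>. emp_classifier PX f (emp_dist (n j) (\<omega> j)) y))
      = Gc PX f (p j)" if j: "j < m" for j
  proof
    fix y
    show "measure_pmf.expectation \<Omega> (\<lambda>\<omega>. emp_classifier PX f (emp_dist (n j) (\<omega> j)) y) = Gc PX f (p j) y"
      unfolding ec Gc_expand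
      by (simp add: intg Bochner_Integration.integral_sum EPh[OF j, unfolded Ph_def])
  qed
  have gstar: "(\<lambda>y. \<Sum>j<m. \<alpha> j *\<^sub>R emp_classifier PX f (emp_dist (n j) (\<omega> j)) y)
      = Gc PX f (\<lambda>z. \<Sum>j<m. \<alpha> j * Ph j (\<omega> j) z)" for \<omega>
  proof
    fix y
    let ?C = "\<lambda>x'. real CARD('y) *\<^sub>R (Linv PX f *v f x')"
    have "(\<Sum>j<m. \<alpha> j *\<^sub>R (\<Sum>x'\<in>UNIV. emp_dist (n j) (\<omega> j) (x', y) *\<^sub>R ?C x'))
        = (\<Sum>j<m. \<Sum>x'\<in>UNIV. (\<alpha> j * emp_dist (n j) (\<omega> j) (x', y)) *\<^sub>R ?C x')"
      by (simp add: scaleR_sum_right mult.assoc)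
    also have "\<dots> = (\<Sum>x'\<in>UNIV. \<Sum>j<m. (\<alpha> j * emp_dist (n j) (\<omega> j) (x', y)) *\<^sub>R ?C x')"
      by (rule sum.swap)
    also have "\<dots> = (\<Sum>x'\<in>UNIV. (\<Sum>j<m. \<alpha> j * emp_dist (n j) (\<omega> j) (x', y)) *\<^sub>R ?C x')"
      by (simp only: scaleR_sum_left)
    finally show "(\<Sum>j<m. \<alpha> j *\<^sub>R emp_classifier PX f (emp_dist (n j) (\<omega> j)) y) =
        Gc PX f (\<lambda>z. \<Sum>j<m. \<alpha> j * Ph j (\<omega> j) z) y"
      unfolding ec Gc_expand Ph_def .
  qed
  have perp: "ip PX a (proj PX f h) = 0" for h
    unfolding a_def proj_def[of PX f h] by (rule ip_perp[OF PX_pos A2 A3])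
  have b_proj: "b = proj PX f (\<lambda>z. p i z - (\<Sum>j<m. \<alpha> j * p j z))"
    unfolding b_def by (simp add: fun_eq_iff proj_diff proj_lin)
  have e_proj: "e j w = proj PX f (\<lambda>z. Ph j w z - p j z)" for j w
    unfolding e_def by (simp add: fun_eq_iff proj_diff)
  have ab: "ip PX a b = 0" using perp b_proj by simp
  have ae: "ip PX a (e j w) = 0" for j w using perp e_proj by simp
  have as: "ip PX a (s \<omega>) = 0" for \<omega>
    unfolding s_def ip_sum_right ae by simp
  have Ee: "measure_pmf.expectation \<Omega> (\<lambda>\<omega>. e j (\<omega> j) z) = 0" if j: "j < m" for j z
  proof (cases z)
    case (Pair x y)
    show ?thesis unfolding e_proj Pair proj_expand
      by (simp add: intg Bochner_Integration.integral_sum EPh[OF j])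
  qed
  have Ebe: "measure_pmf.expectation \<Omega> (\<lambda>\<omega>. ip PX b (e j (\<omega> j))) = 0" if j: "j < m" for j
    unfolding ip_def by (simp add: intg Bochner_Integration.integral_sum Ee[OF j])
  have Ess: "measure_pmf.expectation \<Omega> (\<lambda>\<omega>. ip PX (s \<omega>) (s \<omega>)) =
      (\<Sum>j<m. (\<alpha> j)^2 * measure_pmf.expectation \<Omega> (\<lambda>\<omega>. ip PX (e j (\<omega> j)) (e j (\<omega> j))))"
  proof -
    have cross: "measure_pmf.expectation \<Omega> (\<lambda>\<omega>. e j (\<omega> j) z * e k (\<omega> k) z) =
       (if j = k then measure_pmf.expectation \<Omega> (\<lambda>\<omega>. e j (\<omega> j) z * e j (\<omega> j) z) else 0)"
      if "j < m" "k < m" for j k z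
    proof (cases "j = k")
      case False
      then show ?thesis unfolding \<Omega>_def
        using indep_jk[where j=j and k=k and m=m and F="\<lambda>w. e j w z" and G="\<lambda>w. e k w z" and n=n and P=P] that Ee[unfolded \<Omega>_def] by simp
    qed simp
    have "measure_pmf.expectation \<Omega> (\<lambda>\<omega>. ip PX (s \<omega>) (s \<omega>)) =
       (\<Sum>z\<in>UNIV. \<Sum>j<m. \<Sum>k<m. \<alpha> j * \<alpha> k * measure_pmf.expectation \<Omega> (\<lambda>\<omega>. e j (\<omega> j) z * e k (\<omega> k) z) / PX (fst z))"
      unfolding s_def ip_sq_sum
      by (simp only: Bochner_Integration.integral_sum[OF intg] integral_divide_zero integral_mult_right_zero)
    also have "\<dots> = (\<Sum>z\<in>UNIV. \<Sum>j<m. (\<alpha> j)^2 * measure_pmf.expectation \<Omega> (\<lambda>\<omega>. e j (\<omega> j) z * e j (\<omega> j) z) / PX (fst z))"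
    proof (intro sum.cong refl)
      fix z j assume j: "j \<in> {..<m}"
      have "(\<Sum>k<m. \<alpha> j * \<alpha> k * measure_pmf.expectation \<Omega> (\<lambda>\<omega>. e j (\<omega> j) z * e k (\<omega> k) z) / PX (fst z))
          = (\<Sum>k<m. if j = k then \<alpha> j * \<alpha> j * measure_pmf.expectation \<Omega> (\<lambda>\<omega>. e j (\<omega> j) z * e j (\<omega> j) z) / PX (fst z) else 0)"
      proof (rule sum.cong[OF refl])
        fix k assume k: "k \<in> {..<m}"
        show "\<alpha> j * \<alpha> k * measure_pmf.expectation \<Omega> (\<lambda>\<omega>. e j (\<omega> j) z * e k (\<omega> k) z) / PX (fst z)
          = (if j = k then \<alpha> j * \<alpha> j * measure_pmf.expectation \<Omega> (\<lambda>\<omega>. e j (\<omega> j) z * e j (\<omega> j) z) / PX (fst z) else 0)"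
          using cross[of j k z] j k by (cases "j = k") simp_all
      qed
      also have "\<dots> = (\<alpha> j)^2 * measure_pmf.expectation \<Omega> (\<lambda>\<omega>. e j (\<omega> j) z * e j (\<omega> j) z) / PX (fst z)"
        using j by (simp add: power2_eq_square)
      finally show "(\<Sum>k<m. \<alpha> j * \<alpha> k * measure_pmf.expectation \<Omega> (\<lambda>\<omega>. e j (\<omega> j) z * e k (\<omega> k) z) / PX (fst z))
          = (\<alpha> j)^2 * measure_pmf.expectation \<Omega> (\<lambda>\<omega>. e j (\<omega> j) z * e j (\<omega> j) z) / PX (fst z)" .
    qed
    also have "\<dots> = (\<Sum>j<m. (\<alpha> j)^2 * measure_pmf.expectation \<Omega> (\<lambda>\<omega>. ip PX (e j (\<omega> j)) (e j (\<omega> j))))"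
    proof -
      have "(\<Sum>z\<in>UNIV. \<Sum>j<m. (\<alpha> j)^2 * measure_pmf.expectation \<Omega> (\<lambda>\<omega>. e j (\<omega> j) z * e j (\<omega> j) z) / PX (fst z))
         = (\<Sum>j<m. \<Sum>z\<in>UNIV. (\<alpha> j)^2 * measure_pmf.expectation \<Omega> (\<lambda>\<omega>. e j (\<omega> j) z * e j (\<omega> j) z) / PX (fst z))"
        by (rule sum.swap)
      also have "\<dots> = (\<Sum>j<m. (\<alpha> j)^2 * measure_pmf.expectation \<Omega> (\<lambda>\<omega>. ip PX (e j (\<omega> j)) (e j (\<omega> j))))"
        unfolding ip_def by (simp add: intg Bochner_Integration.integral_sum sum_distrib_left)
      finally show ?thesis .
    qed
    finally show ?thesis .
  qed
  have chi_star: "chi2 PX (pmf (P i)) (QPX PX f (\<lambda>y. \<Sum>j<m. \<alpha> j *\<^sub>R emp_classifier PX f (emp_dist (n j) (\<omega> j)) y))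
     = ip PX a a + ip PX b b + ip PX (s \<omega>) (s \<omega>) - 2 * (\<Sum>j<m. \<alpha> j * ip PX b (e j (\<omega> j)))" for \<omega>
  proof -
    have "(\<lambda>z. pmf (P i) z - QPX PX f (\<lambda>y. \<Sum>j<m. \<alpha> j *\<^sub>R emp_classifier PX f (emp_dist (n j) (\<omega> j)) y) z)
       = (\<lambda>z. a z + b z - s \<omega> z)"
      unfolding gstar qg
      by (simp add: fun_eq_iff proj_lin a_def b_def s_def e_def p_def right_diff_distrib sum_subtractf)
    note eq = this
    have bs: "ip PX b (s \<omega>) = (\<Sum>j<m. \<alpha> j * ip PX b (e j (\<omega> j)))"
      unfolding s_def by (rule ip_sum_right)
    show ?thesis unfolding chi2_ip eq ip_expand3 ab as bs by simp
  qed
  have chiV: "chi2 PX (QPX PX f (emp_classifier PX f (emp_dist (n j) (\<omega> j)))) (QPX PX f (Gc PX f (p j)))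
     = ip PX (e j (\<omega> j)) (e j (\<omega> j))" for j \<omega>
    unfolding chi2_ip ec qg e_def Ph_def by simp
  have chi1: "chi2 PX (QPX PX f (Gc PX f (p i))) (\<lambda>xy. \<Sum>j<m. \<alpha> j * QPX PX f (Gc PX f (p j)) xy) = ip PX b b"
  proof -
    have "(\<Sum>j<m. \<alpha> j * c0 PX z) = c0 PX z" for z :: "'x \<times> 'y"
      using \<alpha>_sum by (simp add: sum_distrib_right[symmetric])
    then show ?thesis unfolding chi2_ip qg b_def
      by (simp add: distrib_left sum.distrib)
  qed
  have chi3: "chi2 PX (pmf (P i)) (QPX PX f (Gc PX f (p i))) = ip PX a a"
    unfolding chi2_ip qg a_def p_def by (simp add: diff_diff_eq)
  have R: "measure_pmf.expectation \<Omega> (\<lambda>\<omega>. chi2 PX (pmf (P i)) (QPX PX f (\<lambda>y. \<Sum>j<m. \<alpha> j *\<^sub>R emp_classifier PX f (emp_dist (n j) (\<omega> j)) y)))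
     = ip PX a a + ip PX b b + (\<Sum>j<m. (\<alpha> j)^2 * measure_pmf.expectation \<Omega> (\<lambda>\<omega>. ip PX (e j (\<omega> j)) (e j (\<omega> j))))"
    unfolding chi_star by (simp add: intg Bochner_Integration.integral_sum Ebe Ess)
  have V: "(\<Sum>j<m. (\<alpha> j)^2 / real (n j) * (real (n j) * measure_pmf.expectation \<Omega> (\<lambda>\<omega>. chi2 PX (QPX PX f (emp_classifier PX f (emp_dist (n j) (\<omega> j)))) (QPX PX f (\<lambda>y. measure_pmf.expectation \<Omega> (\<lambda>\<omega>. emp_classifier PX f (emp_dist (n j) (\<omega> j)) y))))))
     = (\<Sum>j<m. (\<alpha> j)^2 * measure_pmf.expectation \<Omega> (\<lambda>\<omega>. ip PX (e j (\<omega> j)) (e j (\<omega> j))))"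
  proof (intro sum.cong refl)
    fix j assume "j \<in> {..<m}"
    then have j: "j < m" by simp
    then show "(\<alpha> j)^2 / real (n j) * (real (n j) * measure_pmf.expectation \<Omega> (\<lambda>\<omega>. chi2 PX (QPX PX f (emp_classifier PX f (emp_dist (n j) (\<omega> j)))) (QPX PX f (\<lambda>y. measure_pmf.expectation \<Omega> (\<lambda>\<omega>. emp_classifier PX f (emp_dist (n j) (\<omega> j)) y)))))
     = (\<alpha> j)^2 * measure_pmf.expectation \<Omega> (\<lambda>\<omega>. ip PX (e j (\<omega> j)) (e j (\<omega> j)))"
      unfolding G[OF j] chiV using n_pos[OF j] by simp
  qed
  have S1: "chi2 PX (QPX PX f (\<lambda>y. measure_pmf.expectation \<Omega> (\<lambda>\<omega>. emp_classifier PX f (emp_dist (n i) (\<omega> i)) y)))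
      (\<lambda>xy. \<Sum>j<m. \<alpha> j * QPX PX f (\<lambda>y. measure_pmf.expectation \<Omega> (\<lambda>\<omega>. emp_classifier PX f (emp_dist (n j) (\<omega> j)) y)) xy) = ip PX b b"
  proof -
    have "(\<lambda>xy. \<Sum>j<m. \<alpha> j * QPX PX f (\<lambda>y. measure_pmf.expectation \<Omega> (\<lambda>\<omega>. emp_classifier PX f (emp_dist (n j) (\<omega> j)) y)) xy)
       = (\<lambda>xy. \<Sum>j<m. \<alpha> j * QPX PX f (Gc PX f (p j)) xy)"
      by (intro ext sum.cong refl) (simp add: G)
    then show ?thesis unfolding G[OF i_lt] using chi1 by simp
  qed
  have S3: "chi2 PX (pmf (P i)) (QPX PX f (\<lambda>y. measure_pmf.expectation \<Omega> (\<lambda>\<omega>. emp_classifier PX f (emp_dist (n i) (\<omega> i)) y))) = ip PX a a"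
    unfolding G[OF i_lt] chi3 ..
  show ?thesis unfolding Let_def \<Omega>_def[symmetric] R V S1 S3 by simp
qed

end
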